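(* For $P\ge2$ and all integers $n>2$, $\beta_P(n)=\prod_{p\le P}\beta_{(p)}(n)$, where \[ \beta_P(n)=\sum_{\substack{d,v\ge1:\ dv^2=n^2-4\\ p\mid v\Rightarrow p\le P}}\frac1v\prod_{p\le P}\Big(1-\frac{\chi_d(p)}{p}\Big)^{-1},\qquad \beta_{(p)}(n)=\sum_{b\ge0}\frac1{p^b}\Big(1-\frac1p\chi_{(n^2-4)p^{-2b}}(p)\Big)^{-1}I_{p^b}(n), \] with $p$ denoting primes.
   Context: Sums over $d$ run over positive non-square discriminants, i.e. positive integers $d$, not perfect squares, with $d\equiv0,1\pmod4$; $v$ runs over positive integers. For such $d$, $\chi_d:\mathbb{Z}\to\{0,\pm1\}$ is the completely multiplicative function with: for odd primes $p$, $\chi_d(p)=0$ if $p\mid d$, $1$ if $p\nmid d$ and $x^2\equiv d\pmod p$ is solvable, $-1$ if insolvable; $\chi_d(2)=1,-1,0$ according as $d\equiv1\pmod 8$, $d\equiv5\pmod8$, $d\equiv0\pmod4$; $\chi_d(-1)=1$. For a prime $p$, $b\in\mathbb{N}_0$ and $n\in\mathbb{Z}$: $I_{p^b}(n)=1$ if $n^2\equiv4\pmod{p^{2b}}$ and, in case $p=2$, additionally $(n^2-4)2^{-2b}\equiv0,1\pmod 4$; otherwise $I_{p^b}(n)=0$. (The term of $\beta_{(p)}(n)$ with $I_{p^b}(n)=0$ is $0$; when $I_{p^b}(n)=1$, $(n^2-4)p^{-2b}$ is a positive non-square discriminant.) *)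

theory Defs
  imports "HOL-Number_Theory.Number_Theory"
begin

definition pos_nonsq_disc :: "int \<Rightarrow> bool" where
  "pos_nonsq_disc d \<longleftrightarrow> d > 0 \<and> (\<nexists>k::int. d = k^2) \<and> (d mod 4 = 0 \<or> d mod 4 = 1)"

definition chi_prime :: "int \<Rightarrow> nat \<Rightarrow> int" where
  "chi_prime d p =
     (if p = 2 then (if d mod 8 = 1 then 1 else if d mod 8 = 5 then -1 else 0)
      else if int p dvd d then 0
      else if (\<exists>x::int. [x^2 = d] (mod int p)) then 1 else -1)"

definition chi :: "int \<Rightarrow> int \<Rightarrow> int" where
  "chi d m = (if m = 0 then 0 else
     (\<Prod>p\<in>prime_factors (nat \<bar>m\<bar>). chi_prime d p ^ multiplicity p (nat \<bar>m\<bar>)))"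

definition I_ind :: "nat \<Rightarrow> nat \<Rightarrow> int \<Rightarrow> bool" where
  "I_ind p b n \<longleftrightarrow> [n^2 = 4] (mod (int p)^(2*b)) \<and>
     (p = 2 \<longrightarrow> ((n^2 - 4) div 2^(2*b)) mod 4 \<in> {0, 1})"

definition beta_P :: "real \<Rightarrow> int \<Rightarrow> real" where
  "beta_P P n = (\<Sum>(d,v)\<in>{(d::int, v::nat). pos_nonsq_disc d \<and> v \<ge> 1 \<and> d * int v^2 = n^2 - 4
                      \<and> (\<forall>p. prime p \<and> p dvd v \<longrightarrow> real p \<le> P)}.
      (1 / real v) * (\<Prod>p\<in>{p::nat. prime p \<and> real p \<le> P}. inverse (1 - of_int (chi d (int p)) / real p)))"

definition beta_loc :: "nat \<Rightarrow> int \<Rightarrow> real" where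
  "beta_loc p n = (\<Sum>b. (1 / real p ^ b)
      * inverse (1 - (1 / real p) * of_int (chi ((n^2 - 4) div (int p)^(2*b)) (int p)))
      * of_bool (I_ind p b n))"

end

theory Submission imports Defs "HOL-Library.FuncSet" begin

lemma chi_at_prime: "prime p \<Longrightarrow> chi d (int p) = chi_prime d p"
proof -
  assume p: "prime p"
  have "prime_factors (nat \<bar>int p\<bar>) = {p}" using p by (simp add: prime_prime_factors)
  moreover have "multiplicity p (nat \<bar>int p\<bar>) = 1" using p by (simp add: multiplicity_prime)
  ultimately show ?thesis using p unfolding chi_def by (simp add: prime_gt_0_nat)
qed

lemma sq_odd_mod8: fixes u d :: int assumes "odd u" shows "(d * u^2) mod 8 = d mod 8"
proof -
  obtain m where u: "u = 2*m+1" using assms by (metis oddE)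
  have "even (m*(m+1))" by simp
  then obtain j where j: "m*(m+1) = 2*j" by blast
  have "u^2 = 4*(m*(m+1)) + 1" unfolding u by (simp add: algebra_simps power2_eq_square)
  then have "u^2 = 8*j+1" using j by simp
  then have "d*u^2 = d + 8*(d*j)" by (simp add: algebra_simps)
  then show ?thesis by simp
qed

lemma chi_prime_sq: fixes d u :: int assumes p: "prime p" and cop: "\<not> int p dvd u"
  shows "chi_prime (d * u^2) p = chi_prime d p"
proof (cases "p = 2")
  case True
  then have "odd u" using cop by auto
  then show ?thesis using True sq_odd_mod8[of u d] by (simp add: chi_prime_def)
next
  case False
  have pi: "prime (int p)" using p by simp
  have dv: "int p dvd d * u^2 \<longleftrightarrow> int p dvd d"
    using pi cop by (metis prime_dvd_mult_iff prime_dvd_power_iff prime_gt_0_int zero_less_numeral power2_eq_square)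
  have cp: "coprime u (int p)" using pi cop by (metis coprime_commute prime_imp_coprime)
  obtain w where w: "[u * w = 1] (mod int p)" using cong_solve_coprime_int[OF cp] by blast
  have qr: "(\<exists>x::int. [x^2 = d*u^2] (mod int p)) \<longleftrightarrow> (\<exists>x::int. [x^2 = d] (mod int p))"
  proof
    assume "\<exists>x::int. [x^2 = d*u^2] (mod int p)"
    then obtain x where x: "[x^2 = d*u^2] (mod int p)" by blast
    have "[(x*w)^2 = d*u^2*w^2] (mod int p)" using x by (simp add: power_mult_distrib cong_mult)
    moreover have "[d*u^2*w^2 = d * (u*w)^2] (mod int p)" by (simp add: power_mult_distrib algebra_simps)
    moreover have "[d * (u*w)^2 = d * 1^2] (mod int p)" using w by (intro cong_mult cong_pow) auto
    ultimately have "[(x*w)^2 = d] (mod int p)" by (metis cong_trans mult.right_neutral power_one)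
    then show "\<exists>x::int. [x^2 = d] (mod int p)" by blast
  next
    assume "\<exists>x::int. [x^2 = d] (mod int p)"
    then obtain x where x: "[x^2 = d] (mod int p)" by blast
    have "[(x*u)^2 = d*u^2] (mod int p)" using x by (simp add: power_mult_distrib cong_mult)
    then show "\<exists>x::int. [x^2 = d*u^2] (mod int p)" by blast
  qed
  show ?thesis using False dv qr by (simp add: chi_prime_def)
qed

lemma nonsq: fixes n k :: int assumes "n > 2" shows "n^2 - 4 \<noteq> k^2"
proof
  assume h: "n^2 - 4 = k^2"
  define m where "m = \<bar>k\<bar>"
  have m2: "m^2 = k^2" "m \<ge> 0" unfolding m_def by simp_all
  have "m^2 < n^2" using h m2 by simp
  then have "m < n" by (rule power_less_imp_less_base) (use assms in auto)
  then have "m \<le> n - 1" by simp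
  then have "m^2 \<le> (n-1)^2" using m2 by (intro power_mono) auto
  then show False using h m2 assms by (simp add: power2_eq_square algebra_simps)
qed

lemma I_ind_iff: "I_ind p b n \<longleftrightarrow> int p^(2*b) dvd n^2-4 \<and> (p=2 \<longrightarrow> ((n^2-4) div 2^(2*b)) mod 4 \<in> {0,1})"
  unfolding I_ind_def cong_iff_dvd_diff ..

lemma I_ind_dvd: "I_ind p b n \<Longrightarrow> p^(2*b) dvd nat (n^2 - 4)"
proof -
  assume "I_ind p b n"
  then have h: "int (p^(2*b)) dvd n^2 - 4" unfolding I_ind_iff of_nat_power by blast
  show ?thesis
  proof (cases "n^2 - 4 \<ge> 0")
    case True
    then have "int (nat (n^2-4)) = n^2 - 4" by simp
    then have "int (p^(2*b)) dvd int (nat (n^2-4))" using h by simp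
    then show ?thesis by (simp only: int_dvd_int_iff)
  next
    case False
    then have "nat (n^2-4) = 0" by simp
    then show ?thesis by simp
  qed
qed

lemma exp_bound: assumes "prime (p::nat)" "p^(2*b) dvd N" "N > 0" shows "b < N"
proof -
  have "p \<ge> 2" using assms prime_ge_2_nat by blast
  have "b < 2^b" by (rule less_exp)
  also have "... \<le> p^b" using \<open>p \<ge> 2\<close> by (intro power_mono) auto
  also have "... \<le> p^(2*b)" using \<open>p \<ge> 2\<close> by (intro power_increasing) auto
  also have "... \<le> N" using assms by (intro dvd_imp_le) auto
  finally show ?thesis .
qed

lemma n2pos: fixes n :: int assumes "n > 2" shows "n^2 - 4 > 0"
proof -
  have "(2::int)^2 < n^2" by (rule power_strict_mono) (use assms in auto)
  then show ?thesis by simp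
qed

lemma beta_loc_fin: assumes "prime p" "n > 2"
  shows "beta_loc p n = (\<Sum>b<nat (n^2-4). (1 / real p ^ b)
      * inverse (1 - (1 / real p) * of_int (chi ((n^2 - 4) div (int p)^(2*b)) (int p)))
      * of_bool (I_ind p b n))"
  unfolding beta_loc_def
proof (rule suminf_finite)
  fix b assume "b \<notin> {..<nat (n^2-4)}"
  moreover have "n^2 - 4 > 0" using n2pos[OF assms(2)] .
  ultimately have "\<not> I_ind p b n" using I_ind_dvd exp_bound[OF assms(1)] by fastforce
  then show "1 / real p ^ b * inverse (1 - 1 / real p * real_of_int (chi ((n^2 - 4) div (int p)^(2*b)) (int p))) * of_bool (I_ind p b n) = 0" by simp
qed simp

lemma split_lemma:
  fixes D d :: int
  assumes S: "finite S" "\<And>q. q \<in> S \<Longrightarrow> prime q" and p: "p \<in> S"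
    and D: "D = d * int (\<Prod>q\<in>S. q ^ h q)^2"
  shows "D div int p^(2 * h p) = d * int (\<Prod>q\<in>S-{p}. q ^ h q)^2 \<and> \<not> p dvd (\<Prod>q\<in>S-{p}. q ^ h q)"
proof
  define w where "w = (\<Prod>q\<in>S-{p}. q ^ h q)"
  have "(\<Prod>q\<in>S. q ^ h q) = p ^ h p * w" unfolding w_def using S p by (simp add: prod.remove)
  then have "D = int p^(2 * h p) * (d * int w^2)" using D by (simp add: power_mult_distrib power_mult algebra_simps)
  moreover have "int p \<noteq> 0" using S p prime_gt_0_nat by fastforce
  ultimately show "D div int p^(2 * h p) = d * int (\<Prod>q\<in>S-{p}. q ^ h q)^2" unfolding w_def by simp
  have "multiplicity p w = 0" unfolding w_def using S p by (subst multiplicity_prod_prime_powers) auto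
  moreover have "w \<noteq> 0"
  proof -
    have "\<forall>q\<in>S-{p}. q^h q \<noteq> 0" using S(2) by (metis Diff_iff not_prime_0 power_not_zero)
    then show ?thesis unfolding w_def using S(1) by (metis finite_Diff prod_zero_iff)
  qed
  ultimately show "\<not> p dvd (\<Prod>q\<in>S-{p}. q ^ h q)" unfolding w_def[symmetric]
    using prime_multiplicity_gt_zero_iff[OF prime_imp_prime_elem[OF S(2)[OF p]] \<open>w \<noteq> 0\<close>] by simp
qed

lemma sq_odd_mod4: fixes u d :: int assumes "odd u" shows "(d * u^2) mod 4 = d mod 4"
proof -
  have "(d * u^2) mod 4 = ((d * u^2) mod 8) mod 4" by (simp add: mod_mod_cancel)
  also have "... = (d mod 8) mod 4" using sq_odd_mod8[OF assms] by simp
  also have "... = d mod 4" by (simp add: mod_mod_cancel)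
  finally show ?thesis .
qed

theorem lemma4p1:
  fixes P :: real and n :: int
  assumes "P \<ge> 2" and "n > 2"
  shows "beta_P P n = (\<Prod>p\<in>{p::nat. prime p \<and> real p \<le> P}. beta_loc p n)"
proof -
  define D where "D = n^2 - 4"
  have Dpos: "D > 0" unfolding D_def using n2pos[OF assms(2)] .
  define N where "N = nat D"
  have ND: "int N = D" unfolding N_def using Dpos by simp
  have Npos: "N > 0" unfolding N_def using Dpos by simp
  define S where "S = {p::nat. prime p \<and> real p \<le> P}"
  have primeS: "\<And>q. q \<in> S \<Longrightarrow> prime q" unfolding S_def by simp
  have finS: "finite S"
  proof (rule finite_subset)
    show "S \<subseteq> {..nat \<lceil>P\<rceil>}"
    proof
      fix p assume "p \<in> S"
      then have "real p \<le> P" unfolding S_def by blast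
      then have "real p \<le> real (nat \<lceil>P\<rceil>)" using real_nat_ceiling_ge[of P] by linarith
      then show "p \<in> {..nat \<lceil>P\<rceil>}" by simp
    qed
  qed simp
  have twoS: "2 \<in> S" unfolding S_def using assms(1) two_is_prime_nat by simp
  define g where "g = (\<lambda>p b. (1 / real p ^ b)
      * inverse (1 - (1 / real p) * of_int (chi (D div (int p)^(2*b)) (int p)))
      * of_bool (I_ind p b n))"
  define vv where "vv = (\<lambda>h::nat\<Rightarrow>nat. \<Prod>p\<in>S. p ^ h p)"
  define \<phi> where "\<phi> = (\<lambda>h. (D div int (vv h)^2, vv h))"
  define H where "H = {h \<in> PiE S (\<lambda>_. {..<N}). \<forall>p\<in>S. I_ind p (h p) n}"
  define T where "T = {(d::int, v::nat). pos_nonsq_disc d \<and> v \<ge> 1 \<and> d * int v^2 = D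
                      \<and> (\<forall>p. prime p \<and> p dvd v \<longrightarrow> real p \<le> P)}"
  define tm where "tm = (\<lambda>(d::int,v::nat). (1 / real v) * (\<Prod>p\<in>S. inverse (1 - of_int (chi d (int p)) / real p)))"
  have betaP: "beta_P P n = sum tm T" unfolding beta_P_def T_def tm_def S_def D_def by simp

  have vvpos: "vv h > 0" for h unfolding vv_def using primeS finS
    by (intro prod_pos) (auto simp: prime_gt_0_nat)
  have mult_vv: "multiplicity q (vv h) = (if q \<in> S then h q else 0)" if "prime q" for q h
    unfolding vv_def using finS primeS that by (rule multiplicity_prod_prime_powers)
  have vv_sq: "(vv h)^2 = (\<Prod>p\<in>S. p ^ (2 * h p))" for h
    unfolding vv_def by (simp add: prod_power_distrib power_mult[symmetric] mult.commute)

  have H_dvd: "int (vv h)^2 dvd D" if "h \<in> H" for h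
  proof -
    have "(vv h)^2 dvd N"
    proof (rule multiplicity_le_imp_dvd)
      show "(vv h)^2 \<noteq> 0" using vvpos[of h] by simp
      fix q :: nat assume q: "prime q"
      have "multiplicity q ((vv h)^2) = (if q \<in> S then 2 * h q else 0)"
        unfolding vv_sq using finS primeS q by (rule multiplicity_prod_prime_powers)
      moreover have "2 * h q \<le> multiplicity q N" if "q \<in> S"
      proof -
        have "I_ind q (h q) n" using \<open>h \<in> H\<close> that unfolding H_def by auto
        then have "q^(2 * h q) dvd N" unfolding N_def D_def by (rule I_ind_dvd)
        moreover have "\<not> is_unit q" using primeS[OF that] by (simp add: prime_nat_iff)
        ultimately show ?thesis using multiplicity_geI[of N q "2 * h q"] Npos by simp
      qed
      ultimately show "multiplicity q ((vv h)^2) \<le> multiplicity q N" by auto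
    qed
    then have "int ((vv h)^2) dvd int N" by (simp only: int_dvd_int_iff)
    then show ?thesis using ND by simp
  qed
  have H_eq: "D = (D div int (vv h)^2) * int (vv h)^2" if "h \<in> H" for h
    using H_dvd[OF that] by simp

  have chi_eq: "chi (D div int p^(2 * h p)) (int p) = chi d (int p)"
    if "p \<in> S" "D = d * int (vv h)^2" for p h d
  proof -
    have sp: "D div int p^(2 * h p) = d * int (\<Prod>q\<in>S-{p}. q ^ h q)^2 \<and> \<not> p dvd (\<Prod>q\<in>S-{p}. q ^ h q)"
      using split_lemma[OF finS primeS that(1)] that(2) unfolding vv_def by blast
    have "\<not> int p dvd int (\<Prod>q\<in>S-{p}. q ^ h q)" using sp int_dvd_int_iff by blast
    then show ?thesis using sp chi_prime_sq[OF primeS[OF that(1)]] chi_at_prime[OF primeS[OF that(1)]]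
      by simp
  qed

  have mod4: "d mod 4 \<in> {0,1}" if "D = d * int (vv h)^2" "I_ind 2 (h 2) n" for d h
  proof -
    have sp: "D div int 2^(2 * h 2) = d * int (\<Prod>q\<in>S-{2}. q ^ h q)^2 \<and> \<not> 2 dvd (\<Prod>q\<in>S-{2}. q ^ h q)"
      using split_lemma[OF finS primeS twoS] that(1) unfolding vv_def by blast
    have "odd (int (\<Prod>q\<in>S-{2}. q ^ h q))" using sp even_of_nat_iff by blast
    then have "(d * int (\<Prod>q\<in>S-{2}. q ^ h q)^2) mod 4 = d mod 4" by (rule sq_odd_mod4)
    moreover have "(D div 2^(2 * h 2)) mod 4 \<in> {0,1}" using that(2) unfolding I_ind_iff D_def by simp
    ultimately show ?thesis using sp by simp
  qed

  have phiT: "\<phi> h \<in> T" if "h \<in> H" for h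
  proof -
    define d where "d = D div int (vv h)^2"
    have Dd: "D = d * int (vv h)^2" unfolding d_def using H_eq[OF that] .
    have "d > 0" using Dd Dpos vvpos[of h] by (metis zero_less_mult_iff zero_less_power of_nat_0_less_iff not_less_iff_gr_or_eq)
    moreover have "\<nexists>k. d = k^2"
    proof
      assume "\<exists>k. d = k^2"
      then obtain k where "d = k^2" by blast
      then have "n^2 - 4 = (k * int (vv h))^2" using Dd unfolding D_def by (simp add: power_mult_distrib)
      then show False using nonsq[OF assms(2)] by blast
    qed
    moreover have "d mod 4 \<in> {0,1}" using mod4[OF Dd] that twoS unfolding H_def by auto
    moreover have "real q \<le> P" if "prime q" "q dvd vv h" for q
    proof -
      have "multiplicity q (vv h) > 0" using that vvpos[of h]
        by (simp add: prime_multiplicity_gt_zero_iff)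
      then have "q \<in> S" using mult_vv[OF that(1)] by (auto split: if_splits)
      then show ?thesis unfolding S_def by simp
    qed
    ultimately show ?thesis unfolding T_def \<phi>_def d_def[symmetric] pos_nonsq_disc_def
      using Dd vvpos[of h] by auto
  qed

  have inj: "inj_on \<phi> H"
  proof (rule inj_onI)
    fix h1 h2 assume h: "h1 \<in> H" "h2 \<in> H" "\<phi> h1 = \<phi> h2"
    from h(3) have "snd (\<phi> h1) = snd (\<phi> h2)" by (rule arg_cong)
    then have e: "vv h1 = vv h2" unfolding \<phi>_def by simp
    show "h1 = h2"
    proof (rule PiE_ext)
      show "h1 \<in> PiE S (\<lambda>_. {..<N})" using h(1) unfolding H_def by blast
      show "h2 \<in> PiE S (\<lambda>_. {..<N})" using h(2) unfolding H_def by blast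
      fix p assume pS: "p \<in> S"
      have "h1 p = multiplicity p (vv h1)" using mult_vv[OF primeS[OF pS], of h1] pS by simp
      also have "... = multiplicity p (vv h2)" using e by (rule arg_cong)
      also have "... = h2 p" using mult_vv[OF primeS[OF pS], of h2] pS by simp
      finally show "h1 p = h2 p" .
    qed
  qed

  have surj: "T \<subseteq> \<phi> ` H"
  proof
    fix x assume "x \<in> T"
    then obtain d v where x: "x = (d, v)" and dT: "pos_nonsq_disc d" "v \<ge> 1" "d * int v^2 = D"
       and pf: "\<And>p. prime p \<Longrightarrow> p dvd v \<Longrightarrow> real p \<le> P" unfolding T_def by auto
    define h where "h = restrict (\<lambda>p. multiplicity p v) S"
    have "vv h = (\<Prod>p\<in>S. p ^ multiplicity p v)" unfolding vv_def h_def by (intro prod.cong) auto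
    also have "... = (\<Prod>p\<in>prime_factors v. p ^ multiplicity p v)"
    proof (rule prod.mono_neutral_right[OF finS])
      show "prime_factors v \<subseteq> S" using pf dT(2) unfolding S_def by (auto simp: in_prime_factors_iff)
      show "\<forall>i\<in>S - prime_factors v. i ^ multiplicity i v = 1"
        using dT(2) primeS by (auto simp: in_prime_factors_iff not_dvd_imp_multiplicity_0)
    qed
    also have "... = v" using dT(2) by (simp add: prod_prime_factors)
    finally have vh: "vv h = v" .
    have vN: "v^2 dvd N"
    proof -
      have "int (v^2) dvd int N" using dT(3) ND by (metis dvd_triv_right of_nat_power)
      then show ?thesis by (simp only: int_dvd_int_iff)
    qed
    have "h \<in> H" unfolding H_def
    proof (intro CollectI conjI ballI)
      have "h p < N" if "p \<in> S" for p
      proof -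
        have "p ^ multiplicity p v dvd v" by (rule multiplicity_dvd)
        then have "(p ^ multiplicity p v)^2 dvd v^2" by (rule dvd_power_same)
        then have "p ^ (2 * multiplicity p v) dvd N" using vN
          by (metis dvd_trans power_mult mult.commute)
        then have "multiplicity p v < N" using exp_bound[OF primeS[OF that] _ Npos] by blast
        then show ?thesis unfolding h_def using that by simp
      qed
      then show "h \<in> PiE S (\<lambda>_. {..<N})" unfolding h_def by auto
      fix p assume pS: "p \<in> S"
      have Dv: "D = d * int (vv h)^2" using vh dT(3) by simp
      have "int p ^ (2 * h p) dvd n^2 - 4"
      proof -
        have "p ^ h p dvd vv h" using mult_vv[OF primeS[OF pS], of h] pS
          by (metis multiplicity_dvd)
        then have "p ^ (2 * h p) dvd (vv h)^2" by (metis dvd_power_same power_mult mult.commute)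
        then have "int (p ^ (2 * h p)) dvd int ((vv h)^2)" by (simp only: int_dvd_int_iff)
        then show ?thesis using Dv unfolding D_def by (metis dvd_mult of_nat_power)
      qed
      moreover have "((n^2-4) div 2^(2 * h 2)) mod 4 \<in> {0,1}"
      proof -
        have sp: "D div int 2^(2 * h 2) = d * int (\<Prod>q\<in>S-{2}. q ^ h q)^2 \<and> \<not> 2 dvd (\<Prod>q\<in>S-{2}. q ^ h q)"
          using split_lemma[OF finS primeS twoS] Dv unfolding vv_def by blast
        have "odd (int (\<Prod>q\<in>S-{2}. q ^ h q))" using sp even_of_nat_iff by blast
        then have "(d * int (\<Prod>q\<in>S-{2}. q ^ h q)^2) mod 4 = d mod 4" by (rule sq_odd_mod4)
        then show ?thesis using sp dT(1) unfolding pos_nonsq_disc_def D_def by simp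
      qed
      ultimately show "I_ind p (h p) n" unfolding I_ind_iff by auto
    qed
    moreover have "\<phi> h = x" unfolding \<phi>_def x vh using dT(2,3) by auto
    ultimately show "x \<in> \<phi> ` H" by blast
  qed
  have bij: "bij_betw \<phi> H T" unfolding bij_betw_def using inj surj phiT by blast

  have term_eq: "(\<Prod>p\<in>S. g p (h p)) = tm (\<phi> h)" if "h \<in> H" for h
  proof -
    define d where "d = D div int (vv h)^2"
    have Dd: "D = d * int (vv h)^2" unfolding d_def using H_eq[OF that] .
    have "(\<Prod>p\<in>S. g p (h p)) = (\<Prod>p\<in>S. (1 / real p ^ h p) * inverse (1 - of_int (chi d (int p)) / real p))"
    proof (rule prod.cong)
      fix p assume pS: "p \<in> S"
      have "I_ind p (h p) n" using that pS unfolding H_def by auto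
      then show "g p (h p) = (1 / real p ^ h p) * inverse (1 - of_int (chi d (int p)) / real p)"
        unfolding g_def using chi_eq[OF pS Dd] by simp
    qed simp
    also have "... = (\<Prod>p\<in>S. 1 / real p ^ h p) * (\<Prod>p\<in>S. inverse (1 - of_int (chi d (int p)) / real p))"
      by (rule prod.distrib)
    also have "(\<Prod>p\<in>S. 1 / real p ^ h p) = 1 / real (vv h)"
      unfolding vv_def by (simp add: prod_dividef of_nat_prod)
    finally show ?thesis unfolding tm_def \<phi>_def d_def by simp
  qed

  have "(\<Prod>p\<in>S. beta_loc p n) = (\<Prod>p\<in>S. \<Sum>b<N. g p b)"
  proof (rule prod.cong)
    fix p assume "p \<in> S"
    then show "beta_loc p n = (\<Sum>b<N. g p b)"
      using beta_loc_fin[OF primeS[OF \<open>p \<in> S\<close>] assms(2)] unfolding g_def N_def D_def by simp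
  qed simp
  also have "... = (\<Sum>h\<in>PiE S (\<lambda>_. {..<N}). \<Prod>p\<in>S. g p (h p))"
    by (rule prod_sum_PiE) (auto simp: finS)
  also have "... = (\<Sum>h\<in>H. \<Prod>p\<in>S. g p (h p))"
  proof (rule sum.mono_neutral_right)
    show "finite (PiE S (\<lambda>_. {..<N}))" using finS by (simp add: finite_PiE)
    show "H \<subseteq> PiE S (\<lambda>_. {..<N})" unfolding H_def by auto
    show "\<forall>h\<in>PiE S (\<lambda>_. {..<N}) - H. (\<Prod>p\<in>S. g p (h p)) = 0"
    proof
      fix h assume "h \<in> PiE S (\<lambda>_. {..<N}) - H"
      then obtain p where "p \<in> S" "\<not> I_ind p (h p) n" unfolding H_def by auto
      then show "(\<Prod>p\<in>S. g p (h p)) = 0" using finS unfolding g_def by (auto simp: prod_zero_iff)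
    qed
  qed
  also have "... = (\<Sum>h\<in>H. tm (\<phi> h))" by (rule sum.cong) (auto simp: term_eq)
  also have "... = sum tm T" by (rule sum.reindex_bij_betw[OF bij])
  finally show ?thesis using betaP unfolding S_def by simp
qed

end
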